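(* Let $G$ be a finitely generated group with finite generating set $S_G$ and let $H\ne\{1\}$ be a finite group. Equip $H\wr G$ with the word metric with respect to $(H\setminus\{1\})\cup S_G$ and let $K$ be the kernel of the projection $H\wr G\to G$ with the induced metric. If $\gamma$ is the growth function of $G$, then $D_K^0(r):=(2r+1)\gamma(r)$ is a $0$-dimensional control function of $K$.
   Context: Wreath product: $H\wr G$ is the set of pairs $(f,g)$, $f:G\to H$ finitely supported, with $(f_1,g_1)(f_2,g_2)=(f_1\cdot(g_1f_2),g_1g_2)$ where $(gf)(\gamma)=f(g^{-1}\gamma)$; $g\in G$ is identified with $(1,g)$ and $a\in H$ with $(f_a,1)$, $f_a(1)=a$, $f_a(\gamma)=1$ otherwise; the projection is $(f,g)\mapsto g$. Growth function: $\gamma(r)=\#\{g\in G:|g|_{S_G}<r\}$. For a metric space $X$, $r>0$: $r$-components of $Y\subseteq X$ are classes of points joined by sequences in $Y$ with consecutive distances $<r$. An $m$-dimensional control function of $X$ is $D:\mathbb{R}_+\to\mathbb{R}_+\cup\{\infty\}$ such that for each $r>0$ there is a cover $\{X_0,\dots,X_m\}$ of $X$ such that every open ball $B(x,r)$ lies in some $X_i$ and every $r$-component of each $X_i$ has diameter at most $D(r)$. *)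

theory Defs
  imports Complex_Main "HOL-Library.Extended_Real"
begin

text \<open>Groups are modelled as types of class group_add (the group operation is
written additively, but no commutativity is assumed).\<close>

definition gen_by :: "'g::group_add set \<Rightarrow> bool" where
  "gen_by S \<longleftrightarrow> (\<forall>x. \<exists>ws. set ws \<subseteq> S \<union> uminus ` S \<and> sum_list ws = x)"

definition grp_wlen :: "'g::group_add set \<Rightarrow> 'g \<Rightarrow> nat" where
  "grp_wlen S x = (LEAST n. \<exists>ws. length ws = n \<and> set ws \<subseteq> S \<union> uminus ` S \<and> sum_list ws = x)"

definition growth :: "'g::group_add set \<Rightarrow> real \<Rightarrow> nat" where
  "growth S r = card {g. real (grp_wlen S g) < r}"

type_synonym ('h,'g) wr = "('g \<Rightarrow> 'h) \<times> 'g"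

definition wr_carrier :: "('h::group_add, 'g::group_add) wr set" where
  "wr_carrier = {(f, g). finite {x. f x \<noteq> 0}}"

definition wr_mult :: "('h::group_add, 'g::group_add) wr \<Rightarrow> ('h,'g) wr \<Rightarrow> ('h,'g) wr" where
  "wr_mult p q = (case p of (f1, g1) \<Rightarrow> case q of (f2, g2) \<Rightarrow>
      (\<lambda>x. f1 x + f2 (- g1 + x), g1 + g2))"

definition wr_one :: "('h::group_add, 'g::group_add) wr" where
  "wr_one = (\<lambda>_. 0, 0)"

definition wr_inv :: "('h::group_add, 'g::group_add) wr \<Rightarrow> ('h,'g) wr" where
  "wr_inv p = (case p of (f, g) \<Rightarrow> (\<lambda>x. - f (g + x), - g))"

definition emb_G :: "'g::group_add \<Rightarrow> ('h::group_add, 'g) wr" where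
  "emb_G g = (\<lambda>_. 0, g)"

definition emb_H :: "'h::group_add \<Rightarrow> ('h, 'g::group_add) wr" where
  "emb_H a = (\<lambda>x. if x = 0 then a else 0, 0)"

definition wr_gens :: "'g::group_add set \<Rightarrow> ('h::group_add, 'g) wr set" where
  "wr_gens S = emb_H ` {a. a \<noteq> 0} \<union> emb_G ` S"

definition wr_prod :: "('h::group_add, 'g::group_add) wr list \<Rightarrow> ('h,'g) wr" where
  "wr_prod ws = foldr wr_mult ws wr_one"

definition wr_wlen :: "'g::group_add set \<Rightarrow> ('h::group_add, 'g) wr \<Rightarrow> nat" where
  "wr_wlen S x = (LEAST n. \<exists>ws. length ws = n \<and>
      set ws \<subseteq> wr_gens S \<union> wr_inv ` wr_gens S \<and> wr_prod ws = x)"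

definition wr_dist :: "'g::group_add set \<Rightarrow> ('h::group_add, 'g) wr \<Rightarrow> ('h,'g) wr \<Rightarrow> real" where
  "wr_dist S x y = real (wr_wlen S (wr_mult (wr_inv x) y))"

definition wr_kernel :: "('h::group_add, 'g::group_add) wr set" where
  "wr_kernel = {p \<in> wr_carrier. snd p = 0}"

definition mball :: "('a \<Rightarrow> 'a \<Rightarrow> real) \<Rightarrow> 'a set \<Rightarrow> 'a \<Rightarrow> real \<Rightarrow> 'a set" where
  "mball d X x r = {y \<in> X. d x y < r}"

definition r_component :: "('a \<Rightarrow> 'a \<Rightarrow> real) \<Rightarrow> real \<Rightarrow> 'a set \<Rightarrow> 'a \<Rightarrow> 'a set" where
  "r_component d r Y x =
     {y. x \<in> Y \<and> (\<lambda>a b. a \<in> Y \<and> b \<in> Y \<and> d a b < r)\<^sup>*\<^sup>* x y}"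

definition r_components :: "('a \<Rightarrow> 'a \<Rightarrow> real) \<Rightarrow> real \<Rightarrow> 'a set \<Rightarrow> 'a set set" where
  "r_components d r Y = r_component d r Y ` Y"

definition diam_le :: "('a \<Rightarrow> 'a \<Rightarrow> real) \<Rightarrow> 'a set \<Rightarrow> ereal \<Rightarrow> bool" where
  "diam_le d C D \<longleftrightarrow> (\<forall>x\<in>C. \<forall>y\<in>C. ereal (d x y) \<le> D)"

definition control_function ::
  "nat \<Rightarrow> ('a \<Rightarrow> 'a \<Rightarrow> real) \<Rightarrow> 'a set \<Rightarrow> (real \<Rightarrow> ereal) \<Rightarrow> bool" where
  "control_function m d X D \<longleftrightarrow>
     (\<forall>r>0. \<exists>Xs :: nat \<Rightarrow> 'a set.
        (\<forall>i\<le>m. Xs i \<subseteq> X) \<and> X = (\<Union>i\<le>m. Xs i) \<and>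
        (\<forall>x\<in>X. \<exists>i\<le>m. mball d X x r \<subseteq> Xs i) \<and>
        (\<forall>i\<le>m. \<forall>C\<in>r_components d r (Xs i). diam_le d C (D r)))"

end

theory Submission
  imports Defs
begin

abbreviation valid_w :: "'g::group_add set \<Rightarrow> ('h::group_add, 'g) wr list \<Rightarrow> bool" where
  "valid_w S ws \<equiv> set ws \<subseteq> wr_gens S \<union> wr_inv ` wr_gens S"

lemma wr_mult_assoc: "wr_mult (wr_mult p q) u = wr_mult p (wr_mult q u)"
  by (cases p; cases q; cases u) (simp add: wr_mult_def add.assoc minus_add diff_conv_add_uminus del: add_uminus_conv_diff)

lemma wr_mult_one: "wr_mult wr_one p = p"
  by (cases p) (simp add: wr_mult_def wr_one_def)

lemma wr_mult_one_right: "wr_mult p wr_one = p"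
  by (cases p) (simp add: wr_mult_def wr_one_def)

lemma wr_prod_Nil: "wr_prod [] = wr_one"
  by (simp add: wr_prod_def)

lemma foldr_wr: "foldr wr_mult xs q = wr_mult (wr_prod xs) q"
  by (induction xs) (simp_all add: wr_prod_def wr_mult_one wr_mult_assoc)

lemma wr_prod_append: "wr_prod (xs @ ys) = wr_mult (wr_prod xs) (wr_prod ys)"
proof -
  have "wr_prod (xs @ ys) = foldr wr_mult xs (wr_prod ys)" by (simp add: wr_prod_def)
  thus ?thesis by (simp only: foldr_wr)
qed

lemma wr_prod_Cons: "wr_prod (x # xs) = wr_mult x (wr_prod xs)"
  by (simp add: wr_prod_def)

lemma wr_prod_embG: "wr_prod (map emb_G ws) = (emb_G (sum_list ws) :: ('h::group_add,'g::group_add) wr)"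
  by (induction ws) (simp_all add: wr_prod_def wr_one_def emb_G_def wr_mult_def)

lemma sum_list_rev_neg: "sum_list (rev (map uminus ws)) = - sum_list (ws :: 'g::group_add list)"
  by (induction ws) (simp_all add: minus_add)

lemma wr_inv_embG: "wr_inv (emb_G t) = emb_G (- t)"
  by (simp add: wr_inv_def emb_G_def)

lemma wr_inv_embH: "wr_inv (emb_H a :: ('h::group_add,'g::group_add) wr) = emb_H (- a)"
  by (auto simp add: wr_inv_def emb_H_def)

lemma valid_embG:
  assumes "set ws \<subseteq> S \<union> uminus ` S"
  shows "valid_w S (map (emb_G :: 'g \<Rightarrow> ('h::group_add,'g::group_add) wr) ws)"
proof
  fix x assume "x \<in> set (map (emb_G :: 'g \<Rightarrow> ('h,'g) wr) ws)"
  then obtain s where s: "s \<in> set ws" "x = emb_G s" by auto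
  show "x \<in> wr_gens S \<union> wr_inv ` wr_gens S"
  proof (cases "s \<in> S")
    case True thus ?thesis using s by (auto simp: wr_gens_def)
  next
    case False
    then obtain t where "t \<in> S" "s = - t" using s assms by auto
    hence "x = wr_inv (emb_G t)" using s by (simp add: wr_inv_embG)
    moreover have "emb_G t \<in> wr_gens S" using \<open>t \<in> S\<close> by (simp add: wr_gens_def)
    ultimately show ?thesis by blast
  qed
qed

lemma grp_wlen_ex:
  assumes "gen_by S"
  shows "\<exists>ws. length ws = grp_wlen S x \<and> set ws \<subseteq> S \<union> uminus ` S \<and> sum_list ws = x"
proof -
  from assms obtain ws where "set ws \<subseteq> S \<union> uminus ` S \<and> sum_list ws = x"
    unfolding gen_by_def by blast
  hence "\<exists>n. \<exists>ws. length ws = n \<and> set ws \<subseteq> S \<union> uminus ` S \<and> sum_list ws = x" by blast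
  from LeastI_ex[OF this] show ?thesis unfolding grp_wlen_def .
qed

lemma grp_wlen_le:
  assumes "set ws \<subseteq> S \<union> uminus ` S" "sum_list ws = x"
  shows "grp_wlen S x \<le> length ws"
  unfolding grp_wlen_def by (rule Least_le) (use assms in blast)

lemma grp_wlen_zero: "grp_wlen S 0 = 0"
  using grp_wlen_le[of "[]" S 0] by simp

lemma grp_wlen_step:
  assumes "gen_by S" "s \<in> S \<union> uminus ` S"
  shows "grp_wlen S (s + z) \<le> Suc (grp_wlen S z)"
proof -
  obtain ws where ws: "length ws = grp_wlen S z" "set ws \<subseteq> S \<union> uminus ` S" "sum_list ws = z"
    using grp_wlen_ex[OF assms(1)] by blast
  have "grp_wlen S (s + z) \<le> length (s # ws)"
    by (rule grp_wlen_le) (use ws assms in auto)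
  thus ?thesis using ws by simp
qed


lemma supp_word:
  assumes "gen_by S" "valid_w S ws" "wr_prod ws = (h, g)" "h z \<noteq> 0"
  shows "grp_wlen S z < length ws"
  using assms(2-4)
proof (induction ws arbitrary: h g z)
  case Nil
  hence "h = (\<lambda>_. 0)" by (simp add: wr_prod_def wr_one_def)
  thus ?case using Nil by simp
next
  case (Cons w ws)
  obtain h' g' where hg': "wr_prod ws = (h', g')" by (cases "wr_prod ws")
  have IH: "\<And>z. h' z \<noteq> 0 \<Longrightarrow> grp_wlen S z < length ws" using Cons hg' by auto
  have eq: "wr_mult w (h', g') = (h, g)" using Cons.prems(2) hg' by (simp add: wr_prod_Cons)
  have "w \<in> wr_gens S \<union> wr_inv ` wr_gens S" using Cons.prems(1) by simp
  then consider a where "w = emb_H a" | a where "w = wr_inv (emb_H a)"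
    | s where "s \<in> S" "w = emb_G s" | s where "s \<in> S" "w = wr_inv (emb_G s)"
    unfolding wr_gens_def by blast
  thus ?case
  proof cases
    case (1 a)
    with eq have "h = (\<lambda>x. (if x = 0 then a else 0) + h' x)"
      by (auto simp: wr_mult_def emb_H_def)
    thus ?thesis using Cons.prems(3) IH[of z] by (cases "z = 0") (auto simp: grp_wlen_zero)
  next
    case (2 a)
    with eq have "h = (\<lambda>x. (if x = 0 then - a else 0) + h' x)"
      by (auto simp: wr_mult_def emb_H_def wr_inv_def)
    thus ?thesis using Cons.prems(3) IH[of z] by (cases "z = 0") (auto simp: grp_wlen_zero)
  next
    case (3 s)
    with eq have "h = (\<lambda>x. h' (- s + x))"
      by (auto simp: wr_mult_def emb_G_def)
    hence "grp_wlen S (- s + z) < length ws" using Cons.prems(3) IH by auto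
    moreover have "grp_wlen S (s + (- s + z)) \<le> Suc (grp_wlen S (- s + z))"
      by (rule grp_wlen_step) (use assms(1) 3 in auto)
    ultimately show ?thesis by (simp add: add.assoc[symmetric])
  next
    case (4 s)
    with eq have "h = (\<lambda>x. h' (s + x))"
      by (auto simp: wr_mult_def emb_G_def wr_inv_def)
    hence "grp_wlen S (s + z) < length ws" using Cons.prems(3) IH by auto
    moreover have "grp_wlen S (- s + (s + z)) \<le> Suc (grp_wlen S (s + z))"
      by (rule grp_wlen_step) (use assms(1) 4 in auto)
    ultimately show ?thesis by (simp add: add.assoc[symmetric])
  qed
qed

lemma neg_add_zero_iff: "(- z + x = 0) = (x = (z::'g::group_add))"
  by (auto simp: add_eq_0_iff2)

lemma lamp_t1: "wr_mult (emb_G z) (wr_mult (emb_H a) (wr_mult (emb_G (- z)) (h', g'))) = ((\<lambda>x. (if x = z then a else 0) + h' x, g') :: ('h::group_add,'g::group_add) wr)"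
  by (simp add: wr_mult_def emb_G_def emb_H_def neg_add_zero_iff)

lemma lamp_t2: "wr_prod (map emb_G wz @ [emb_H a] @ map emb_G (rev (map uminus wz)) @ ws) =
     wr_mult (emb_G (sum_list wz)) (wr_mult (emb_H a) (wr_mult (emb_G (- sum_list wz)) (wr_prod ws :: ('h::group_add,'g::group_add) wr)))"
  apply (simp only: wr_prod_append)
  apply (simp only: wr_prod_embG sum_list_rev_neg)
  apply (simp only: wr_prod_Cons wr_prod_Nil wr_mult_one_right append_Cons append_Nil)
  done

lemma lamp_word:
  assumes "wr_prod ws = (h', g')"
  shows "wr_prod (map emb_G wz @ [emb_H a] @ map emb_G (rev (map uminus wz)) @ ws)
   = ((\<lambda>x. (if x = sum_list wz then a else 0) + h' x, g')
      :: ('h::group_add,'g::group_add) wr)"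
  unfolding lamp_t2 assms by (rule lamp_t1)


lemma construct:
  assumes "gen_by S" "finite F" "{x. h x \<noteq> 0} \<subseteq> F"
  shows "\<exists>ws. valid_w S ws \<and> wr_prod ws = ((h, 0) :: ('h::group_add,'g::group_add) wr) \<and>
           length ws \<le> (\<Sum>z\<in>F. 2 * grp_wlen S z + 1)"
  using assms(2,3)
proof (induction F arbitrary: h rule: finite_induct)
  case empty
  hence "h = (\<lambda>_. 0)" by auto
  thus ?case by (intro exI[of _ "[]"]) (simp add: wr_prod_Nil wr_one_def)
next
  case (insert z F)
  define h' where "h' = h(z := 0)"
  have supp': "{x. h' x \<noteq> 0} \<subseteq> F" using insert.prems by (auto simp: h'_def)
  then obtain ws where ws: "valid_w S ws" "wr_prod ws = ((h', 0) :: ('h,'g) wr)"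
    "length ws \<le> (\<Sum>z\<in>F. 2 * grp_wlen S z + 1)" using insert.IH[OF supp'] by metis
  obtain wz where wz: "length wz = grp_wlen S z" "set wz \<subseteq> S \<union> uminus ` S" "sum_list wz = z"
    using grp_wlen_ex[OF assms(1)] by blast
  have sumins: "(\<Sum>y\<in>insert z F. 2 * grp_wlen S y + 1) = 2 * grp_wlen S z + 1 + (\<Sum>y\<in>F. 2 * grp_wlen S y + 1)"
    using insert.hyps by simp
  show ?case
  proof (cases "h z = 0")
    case True
    hence "h' = h" unfolding h'_def by (rule fun_upd_idem)
    hence "wr_prod ws = ((h, 0) :: ('h,'g) wr)" using ws(2) by simp
    moreover have "length ws \<le> (\<Sum>y\<in>insert z F. 2 * grp_wlen S y + 1)" unfolding sumins using ws(3) by linarith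
    ultimately show ?thesis using ws(1) by (intro exI[of _ ws] conjI)
  next
    case False
    let ?w = "map (emb_G :: 'g \<Rightarrow> ('h,'g) wr) wz @ [emb_H (h z)] @ map emb_G (rev (map uminus wz)) @ ws"
    have hh: "(\<lambda>x. (if x = z then h z else 0) + h' x) = h"
      by (rule ext) (simp add: h'_def)
    have "wr_prod ?w = ((\<lambda>x. (if x = sum_list wz then h z else 0) + h' x, 0) :: ('h,'g) wr)"
      by (rule lamp_word[OF ws(2)])
    hence p: "wr_prod ?w = (h, 0)" unfolding wz(3) hh .
    have r: "set (rev (map uminus wz)) \<subseteq> S \<union> uminus ` S"
    proof
      fix y assume "y \<in> set (rev (map uminus wz))"
      then obtain x where x: "x \<in> set wz" "y = - x" by auto
      with wz(2) have "x \<in> S \<or> (\<exists>t\<in>S. x = - t)" by auto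
      thus "y \<in> S \<union> uminus ` S" using x by auto
    qed
    have "emb_H (h z) \<in> (wr_gens S :: ('h,'g) wr set)" unfolding wr_gens_def using False by blast
    hence e: "set [emb_H (h z)] \<subseteq> wr_gens S \<union> wr_inv ` wr_gens S" by simp
    have v: "valid_w S ?w" unfolding set_append
      by (intro Un_least valid_embG[OF wz(2)] e valid_embG[OF r] ws(1))
    have "length ?w = 2 * grp_wlen S z + 1 + length ws" using wz(1) by simp
    hence "length ?w \<le> (\<Sum>y\<in>insert z F. 2 * grp_wlen S y + 1)" unfolding sumins using ws(3) by linarith
    thus ?thesis using v p by (intro exI[of _ ?w] conjI)
  qed
qed

lemma wlen_kernel_bound:
  assumes "gen_by S" "finite F" "{x. h x \<noteq> 0} \<subseteq> F" "\<forall>z\<in>F. real (grp_wlen S z) < r"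
  shows "real (wr_wlen S ((h, 0) :: ('h::group_add,'g::group_add) wr)) \<le> (2 * r + 1) * real (card F)"
proof -
  obtain ws where ws: "valid_w S ws" "wr_prod ws = ((h, 0) :: ('h,'g) wr)"
    "length ws \<le> (\<Sum>z\<in>F. 2 * grp_wlen S z + 1)" using construct[OF assms(1-3)] by metis
  have "wr_wlen S ((h, 0) :: ('h,'g) wr) \<le> length ws"
    unfolding wr_wlen_def by (rule Least_le, rule exI[of _ ws], intro conjI refl ws(1) ws(2))
  hence "real (wr_wlen S ((h, 0) :: ('h,'g) wr)) \<le> real (\<Sum>z\<in>F. 2 * grp_wlen S z + 1)"
    using ws(3) by linarith
  also have "\<dots> = (\<Sum>z\<in>F. 2 * real (grp_wlen S z) + 1)" by (simp add: add.commute)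
  also have "\<dots> \<le> (\<Sum>z\<in>F. 2 * r + 1)"
    by (rule sum_mono) (use assms(4) in auto)
  also have "\<dots> = (2 * r + 1) * real (card F)" by simp
  finally show ?thesis .
qed

lemma wlen_small_supp:
  assumes "gen_by S" "finite {x. h x \<noteq> 0}"
    "real (wr_wlen S ((h, 0) :: ('h::group_add,'g::group_add) wr)) < r" "h z \<noteq> 0"
  shows "real (grp_wlen S z) < r"
proof -
  obtain ws0 where ws0: "valid_w S ws0" "wr_prod ws0 = ((h, 0) :: ('h,'g) wr)"
    using construct[OF assms(1,2) order_refl] by metis
  have "\<exists>n ws. length ws = n \<and> valid_w S ws \<and> wr_prod ws = ((h, 0) :: ('h,'g) wr)"
    by (intro exI[of _ "length ws0"] exI[of _ ws0] conjI refl ws0)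
  from LeastI_ex[OF this] obtain ws where ws: "length ws = wr_wlen S ((h, 0) :: ('h,'g) wr)"
    "valid_w S ws" "wr_prod ws = ((h, 0) :: ('h,'g) wr)" unfolding wr_wlen_def by metis
  have "grp_wlen S z < length ws" by (rule supp_word[OF assms(1) ws(2) ws(3) assms(4)])
  thus ?thesis using ws(1) assms(3) by linarith
qed

lemma finite_ball:
  assumes "finite S" "gen_by S"
  shows "finite {g::'g::group_add. real (grp_wlen S g) < r}"
proof -
  have "{g::'g. real (grp_wlen S g) < r} \<subseteq> sum_list ` {ws. set ws \<subseteq> S \<union> uminus ` S \<and> length ws \<le> nat \<lceil>r\<rceil>}"
  proof
    fix g :: 'g assume g: "g \<in> {g. real (grp_wlen S g) < r}"
    obtain ws where ws: "length ws = grp_wlen S g" "set ws \<subseteq> S \<union> uminus ` S" "sum_list ws = g"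
      using grp_wlen_ex[OF assms(2)] by blast
    have "real (length ws) < r" using g ws(1) by simp
    hence "int (length ws) < \<lceil>r\<rceil>" by (simp add: less_ceiling_iff)
    hence "length ws \<le> nat \<lceil>r\<rceil>" by linarith
    thus "g \<in> sum_list ` {ws. set ws \<subseteq> S \<union> uminus ` S \<and> length ws \<le> nat \<lceil>r\<rceil>}"
      using ws by auto
  qed
  moreover have "finite {ws. set ws \<subseteq> S \<union> uminus ` S \<and> length ws \<le> nat \<lceil>r\<rceil>}"
    by (rule finite_lists_length_le) (use assms(1) in simp)
  ultimately show ?thesis by (meson finite_subset finite_imageI)
qed

lemma kern_diff: "wr_mult (wr_inv (f1, 0)) (f2, 0) = ((\<lambda>x. - f1 x + f2 x, 0) :: ('h::group_add,'g::group_add) wr)"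
  by (simp add: wr_mult_def wr_inv_def)


lemma kernel_elem:
  assumes "p \<in> (wr_kernel :: ('h::group_add,'g::group_add) wr set)"
  shows "p = (fst p, 0) \<and> finite {x. fst p x \<noteq> 0}"
  using assms by (cases p) (auto simp: wr_kernel_def wr_carrier_def)

lemma diff_identity: "- (- a + b) + (- a + c) = - b + (c :: 'h::group_add)"
  by (simp add: minus_add add.assoc)

theorem theorem4p2:
  fixes S :: "'g::group_add set"
  assumes "finite S" and "gen_by S"
    and "(UNIV :: 'h::{group_add, finite} set) \<noteq> {0}"
  shows "control_function 0 (wr_dist S :: ('h,'g) wr \<Rightarrow> ('h,'g) wr \<Rightarrow> real)
           wr_kernel (\<lambda>r. ereal ((2 * r + 1) * real (growth S r)))"
  unfolding control_function_def
proof (intro allI impI)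
  let ?d = "wr_dist S :: ('h,'g) wr \<Rightarrow> ('h,'g) wr \<Rightarrow> real"
  let ?K = "wr_kernel :: ('h,'g) wr set"
  fix r :: real assume r: "r > 0"
  define B where "B = {g::'g. real (grp_wlen S g) < r}"
  have finB: "finite B" using finite_ball[OF assms(1,2)] by (simp add: B_def)
  have stepB: "{x. - fst p x + fst q x \<noteq> 0} \<subseteq> B" if "p \<in> ?K" "q \<in> ?K" "?d p q < r" for p q
  proof -
    have p: "p = (fst p, 0)" "finite {x. fst p x \<noteq> 0}" using kernel_elem[OF that(1)] by auto
    have q: "q = (fst q, 0)" "finite {x. fst q x \<noteq> 0}" using kernel_elem[OF that(2)] by auto
    have fin: "finite {x. - fst p x + fst q x \<noteq> 0}"
      by (rule finite_subset[of _ "{x. fst p x \<noteq> 0} \<union> {x. fst q x \<noteq> 0}"]) (use p q in auto)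
    have "wr_mult (wr_inv p) q = ((\<lambda>x. - fst p x + fst q x, 0) :: ('h,'g) wr)"
      using kern_diff[of "fst p" "fst q"] p(1) q(1) by metis
    hence "real (wr_wlen S ((\<lambda>x. - fst p x + fst q x, 0) :: ('h,'g) wr)) < r"
      using that(3) by (simp add: wr_dist_def)
    thus ?thesis using wlen_small_supp[OF assms(2) fin] by (auto simp: B_def)
  qed
  have c1: "\<forall>i\<le>(0::nat). ?K \<subseteq> ?K" by simp
  have c2: "?K = (\<Union>i\<le>(0::nat). ?K)" by simp
  have c3: "\<forall>x\<in>?K. \<exists>i\<le>(0::nat). mball ?d ?K x r \<subseteq> ?K" by (auto simp: mball_def)
  have c4: "\<forall>i\<le>(0::nat). \<forall>C\<in>r_components ?d r ?K. diam_le ?d C (ereal ((2 * r + 1) * real (growth S r)))"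
    proof (intro allI impI ballI)
      fix i :: nat and C assume "C \<in> r_components ?d r ?K"
      then obtain x0 where x0: "x0 \<in> ?K" "C = r_component ?d r ?K x0"
        by (auto simp: r_components_def)
      have inv: "y \<in> ?K \<and> {x. - fst x0 x + fst y x \<noteq> 0} \<subseteq> B" if "y \<in> C" for y
      proof -
        have "(\<lambda>a b. a \<in> ?K \<and> b \<in> ?K \<and> ?d a b < r)\<^sup>*\<^sup>* x0 y"
          using that x0 by (simp add: r_component_def)
        thus ?thesis
        proof (induction rule: rtranclp_induct)
          case base show ?case using x0(1) by simp
        next
          case (step y z)
          have yz: "{x. - fst y x + fst z x \<noteq> 0} \<subseteq> B" using step.hyps(2) by (intro stepB) auto
          have eq: "- fst x0 x + fst z x = (- fst x0 x + fst y x) + (- fst y x + fst z x)" for x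
            by (simp add: add.assoc)
          have "{x. - fst x0 x + fst z x \<noteq> 0} \<subseteq> B"
          proof
            fix x assume "x \<in> {x. - fst x0 x + fst z x \<noteq> 0}"
            hence "(- fst x0 x + fst y x) \<noteq> 0 \<or> (- fst y x + fst z x) \<noteq> 0" using eq[of x] by auto
            thus "x \<in> B" using yz step.IH by blast
          qed
          thus ?case using step.hyps(2) by simp
        qed
      qed
      show "diam_le ?d C (ereal ((2 * r + 1) * real (growth S r)))" unfolding diam_le_def
      proof (intro ballI)
        fix y1 y2 assume y1: "y1 \<in> C" and y2: "y2 \<in> C"
        have i1: "y1 \<in> ?K" "{x. - fst x0 x + fst y1 x \<noteq> 0} \<subseteq> B" using inv[OF y1] by auto
        have i2: "y2 \<in> ?K" "{x. - fst x0 x + fst y2 x \<noteq> 0} \<subseteq> B" using inv[OF y2] by auto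
        have e1: "y1 = (fst y1, 0)" using kernel_elem[OF i1(1)] by auto
        have e2: "y2 = (fst y2, 0)" using kernel_elem[OF i2(1)] by auto
        have supp: "{x. - fst y1 x + fst y2 x \<noteq> 0} \<subseteq> B"
        proof
          fix x assume "x \<in> {x. - fst y1 x + fst y2 x \<noteq> 0}"
          hence "- (- fst x0 x + fst y1 x) + (- fst x0 x + fst y2 x) \<noteq> 0"
            unfolding diff_identity by simp
          hence "(- fst x0 x + fst y1 x) \<noteq> 0 \<or> (- fst x0 x + fst y2 x) \<noteq> 0" by auto
          thus "x \<in> B" using i1(2) i2(2) by blast
        qed
        have "wr_mult (wr_inv y1) y2 = ((\<lambda>x. - fst y1 x + fst y2 x, 0) :: ('h,'g) wr)"
          using kern_diff[of "fst y1" "fst y2"] e1 e2 by metis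
        hence "?d y1 y2 = real (wr_wlen S ((\<lambda>x. - fst y1 x + fst y2 x, 0) :: ('h,'g) wr))"
          by (simp add: wr_dist_def)
        also have "\<dots> \<le> (2 * r + 1) * real (card B)"
          by (rule wlen_kernel_bound[OF assms(2) finB supp]) (simp add: B_def)
        also have "\<dots> = (2 * r + 1) * real (growth S r)" by (simp add: growth_def B_def)
        finally show "ereal (?d y1 y2) \<le> ereal ((2 * r + 1) * real (growth S r))" by simp
      qed
    qed
  have "(\<forall>i\<le>(0::nat). ?K \<subseteq> ?K) \<and> ?K = (\<Union>i\<le>(0::nat). ?K) \<and>
        (\<forall>x\<in>?K. \<exists>i\<le>(0::nat). mball ?d ?K x r \<subseteq> ?K) \<and>
        (\<forall>i\<le>(0::nat). \<forall>C\<in>r_components ?d r ?K. diam_le ?d C (ereal ((2 * r + 1) * real (growth S r))))"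
    by (intro conjI c1 c2 c3 c4)
  note conj = this
  show "\<exists>Xs :: nat \<Rightarrow> ('h,'g) wr set. (\<forall>i\<le>0. Xs i \<subseteq> ?K) \<and> ?K = (\<Union>i\<le>0. Xs i) \<and>
        (\<forall>x\<in>?K. \<exists>i\<le>0. mball ?d ?K x r \<subseteq> Xs i) \<and>
        (\<forall>i\<le>0. \<forall>C\<in>r_components ?d r (Xs i). diam_le ?d C (ereal ((2 * r + 1) * real (growth S r))))"
    by (rule exI[where x="\<lambda>_. ?K"]) (rule conj)
qed

end
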